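(* Let $c \geq 1$, $r \geq 0$, $k \geq 1$ be integers. Then every $c$-NSOBDD computing the function $F_{r,k}$ has size at least $2^{rk/(4c-2)}$.
   Context: For a graph $G$, the CNF $CNF(G)$ has a variable $X_u$ for each vertex $u$ and a variable $X_{u,v}=X_{v,u}$ for each edge $\{u,v\}$; its clauses are $(X_u \vee X_{u,v} \vee X_v)$ for each edge $\{u,v\}$. $T_r$ is the complete binary tree of height $r$; $CT_{r,k}$ is obtained from $T_r$ by replacing each node by a $k$-clique and, for each edge $\{a,b\}$ of $T_r$, joining every vertex of the clique of $a$ to every vertex of the clique of $b$; $F_{r,k}=CNF(CT_{r,k})$. A non-deterministic branching program is a directed acyclic graph with one root and one leaf, some of whose edges are labelled by literals of variables. A path is consistent if it does not contain two edges labelled by opposite literals of the same variable; a consistent root-leaf path is a computational path. The program computes $F$: an assignment $S$ (viewed as a set of literals) satisfies $F$ iff some computational path has all its edge labels in $S$. A $c$-NSOBDD (nondeterministic semantic $c$-OBDD) is such a program for which there is a permutation $SV$ of its variables such that every computational path $P$ can be written as a concatenation $P=P_1+\dots+P_c$ of subpaths where on each $P_i$ each variable occurs at most once as a label and the sequence of labels along $P_i$ is ordered according to $SV$. Size is the number of nodes. *)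

theory Defs
  imports Complex_Main
begin

text \<open>Variables of CNF(G): one per vertex, one per (undirected) edge; an edge is
  represented as the two-element set of its endpoints, so X_{u,v} = X_{v,u}.\<close>
datatype 'v gvar = VarV 'v | VarE "'v set"

type_synonym 'x lit = "'x \<times> bool"   \<comment> \<open>(x, True) is x, (x, False) is not x\<close>
type_synonym 'x clause = "'x lit set"
type_synonym 'x cnf = "'x clause set"

definition sat :: "'x cnf \<Rightarrow> ('x \<Rightarrow> bool) \<Rightarrow> bool" where
  "sat F S \<longleftrightarrow> (\<forall>C\<in>F. \<exists>(x,b)\<in>C. S x = b)"

text \<open>A graph is given by its edge set (set of 2-element vertex sets).\<close>
definition cnf_of_graph :: "'v set set \<Rightarrow> 'v gvar cnf" where
  "cnf_of_graph Ed = {{(VarV u, True), (VarE {u,v}, True), (VarV v, True)} | u v.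
                         {u,v} \<in> Ed \<and> u \<noteq> v}"

text \<open>Nodes of T_r: binary strings of length at most r (root = []), edges between a
  node and its children a@[x]. Vertices of CT_{r,k}: pairs (a,i) with a a node of T_r and i<k.\<close>
definition tree_nodes :: "nat \<Rightarrow> bool list set" where
  "tree_nodes r = {a. length a \<le> r}"

definition tree_adj :: "bool list \<Rightarrow> bool list \<Rightarrow> bool" where
  "tree_adj a b \<longleftrightarrow> (\<exists>x. b = a @ [x]) \<or> (\<exists>x. a = b @ [x])"

definition CT_vertices :: "nat \<Rightarrow> nat \<Rightarrow> (bool list \<times> nat) set" where
  "CT_vertices r k = {(a,i). a \<in> tree_nodes r \<and> i < k}"

definition CT_edges :: "nat \<Rightarrow> nat \<Rightarrow> (bool list \<times> nat) set set" where
  "CT_edges r k = {{u,v} | u v. u \<in> CT_vertices r k \<and> v \<in> CT_vertices r k \<and> u \<noteq> v \<and>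
                       (fst u = fst v \<or> tree_adj (fst u) (fst v))}"

definition F :: "nat \<Rightarrow> nat \<Rightarrow> (bool list \<times> nat) gvar cnf" where
  "F r k = cnf_of_graph (CT_edges r k)"

text \<open>A program is (N, E, s, t): finite node set N, finite set of edges (u, label, v)
  where label is None (unlabelled) or Some literal; root s, leaf t.\<close>
type_synonym ('n,'x) edge = "'n \<times> 'x lit option \<times> 'n"

fun is_path :: "('n,'x) edge set \<Rightarrow> 'n \<Rightarrow> ('n,'x) edge list \<Rightarrow> 'n \<Rightarrow> bool" where
  "is_path E u [] v \<longleftrightarrow> u = v"
| "is_path E u ((a,l,b) # P) v \<longleftrightarrow> (a,l,b) \<in> E \<and> a = u \<and> is_path E b P v"

definition labels :: "('n,'x) edge list \<Rightarrow> 'x lit list" where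
  "labels P = [the l. (a,l,b) \<leftarrow> P, l \<noteq> None]"

definition consistent :: "('n,'x) edge list \<Rightarrow> bool" where
  "consistent P \<longleftrightarrow> \<not> (\<exists>x. (x,True) \<in> set (labels P) \<and> (x,False) \<in> set (labels P))"

definition is_bp :: "'n set \<Rightarrow> ('n,'x) edge set \<Rightarrow> 'n \<Rightarrow> 'n \<Rightarrow> bool" where
  "is_bp N E s t \<longleftrightarrow> finite N \<and> finite E \<and> s \<in> N \<and> t \<in> N \<and>
     (\<forall>(a,l,b)\<in>E. a \<in> N \<and> b \<in> N) \<and>
     acyclic {(a,b). \<exists>l. (a,l,b) \<in> E} \<and>
     \<comment> \<open>s is the unique root (node without incoming edges)\<close>
     (\<forall>v\<in>N. (\<not>(\<exists>a l. (a,l,v) \<in> E)) \<longleftrightarrow> v = s) \<and>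
     \<comment> \<open>t is the unique leaf (node without outgoing edges)\<close>
     (\<forall>v\<in>N. (\<not>(\<exists>l b. (v,l,b) \<in> E)) \<longleftrightarrow> v = t)"

definition comp_path :: "('n,'x) edge set \<Rightarrow> 'n \<Rightarrow> 'n \<Rightarrow> ('n,'x) edge list \<Rightarrow> bool" where
  "comp_path E s t P \<longleftrightarrow> is_path E s P t \<and> consistent P"

definition computes :: "('n,'x) edge set \<Rightarrow> 'n \<Rightarrow> 'n \<Rightarrow> 'x cnf \<Rightarrow> bool" where
  "computes E s t G \<longleftrightarrow> (\<forall>S. sat G S \<longleftrightarrow>
      (\<exists>P. comp_path E s t P \<and> (\<forall>(x,b)\<in>set (labels P). S x = b)))"

definition prog_vars :: "('n,'x) edge set \<Rightarrow> 'x set" where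
  "prog_vars E = {x. \<exists>a b v. (a, Some (x,b), v) \<in> E}"

text \<open>c-NSOBDD: there is a linear order SV on the program's variables (given by an
  injective ranking) such that every computational path splits into c consecutive
  subpaths, on each of which the label variables occur at most once and in SV order.\<close>
definition is_c_NSOBDD :: "nat \<Rightarrow> 'n set \<Rightarrow> ('n,'x) edge set \<Rightarrow> 'n \<Rightarrow> 'n \<Rightarrow> bool" where
  "is_c_NSOBDD c N E s t \<longleftrightarrow> is_bp N E s t \<and>
     (\<exists>SV :: 'x \<Rightarrow> nat. inj_on SV (prog_vars E) \<and>
        (\<forall>P. comp_path E s t P \<longrightarrow>
           (\<exists>Ps. length Ps = c \<and> concat Ps = P \<and>
                 (\<forall>Q\<in>set Ps. sorted_wrt (<) (map (SV \<circ> fst) (labels Q))))))"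

end

theory Submission
  imports Defs
begin


lemma labels_Nil[simp]: "labels [] = []" by (simp add: labels_def)
lemma labels_Cons[simp]: "labels ((a,l,b) # P) = (if l = None then labels P else the l # labels P)"
  by (simp add: labels_def)
lemma labels_append[simp]: "labels (P @ Q) = labels P @ labels Q"
  by (simp add: labels_def)
lemma labels_concat: "labels (concat Ls) = concat (map labels Ls)"
  by (induction Ls) auto

lemma is_path_append: "is_path E u (P @ Q) v \<longleftrightarrow> (\<exists>w. is_path E u P w \<and> is_path E w Q v)"
  by (induction P arbitrary: u) auto

lemma is_path_N: "is_path E u P v \<Longrightarrow> u \<in> N \<Longrightarrow> (\<forall>(a,l,b)\<in>E. a \<in> N \<and> b \<in> N) \<Longrightarrow> v \<in> N"
  by (induction P arbitrary: u) fastforce+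

lemma is_path_labels_vars: "is_path E u P v \<Longrightarrow> (x,b) \<in> set (labels P) \<Longrightarrow> x \<in> prog_vars E"
proof (induction P arbitrary: u)
  case Nil then show ?case by simp
next
  case (Cons e P)
  obtain a l b' where e: "e = (a,l,b')" by (cases e) auto
  show ?case
  proof (cases "l = None")
    case True with Cons e show ?thesis by auto
  next
    case False
    then obtain y bb where l: "l = Some (y,bb)" by auto
    show ?thesis using Cons e l by (auto simp: prog_vars_def split: if_splits)
  qed
qed

lemma is_path_concat:
  "is_path E u (concat Ls) v \<Longrightarrow> \<exists>ws. length ws = Suc (length Ls) \<and> ws ! 0 = u \<and> ws ! length Ls = v
     \<and> (\<forall>i<length Ls. is_path E (ws ! i) (Ls ! i) (ws ! Suc i))"
proof (induction Ls arbitrary: u)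
  case Nil then show ?case by (intro exI[of _ "[u]"]) auto
next
  case (Cons L Ls)
  then obtain w where 1: "is_path E u L w" and 2: "is_path E w (concat Ls) v" by (auto simp: is_path_append)
  from Cons.IH[OF 2] obtain ws where ws: "length ws = Suc (length Ls)" "ws ! 0 = w" "ws ! length Ls = v"
     "\<forall>i<length Ls. is_path E (ws ! i) (Ls ! i) (ws ! Suc i)" by blast
  show ?case
  proof (intro exI[of _ "u # ws"] conjI allI impI)
    fix i assume "i < length (L # Ls)"
    then show "is_path E ((u # ws) ! i) ((L # Ls) ! i) ((u # ws) ! Suc i)"
      using ws 1 by (cases i) auto
  qed (use ws in auto)
qed

lemma concat_is_path:
  "length ws = Suc (length Ls) \<Longrightarrow> (\<forall>i<length Ls. is_path E (ws ! i) (Ls ! i) (ws ! Suc i))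
   \<Longrightarrow> is_path E (ws ! 0) (concat Ls) (ws ! length Ls)"
proof (induction Ls arbitrary: ws)
  case Nil then show ?case by simp
next
  case (Cons L Ls)
  then obtain w ws' where ws: "ws = w # ws'" by (cases ws) auto
  have "is_path E (ws' ! 0) (concat Ls) (ws' ! length Ls)"
    using Cons.prems ws by (intro Cons.IH) auto
  moreover have "is_path E w L (ws' ! 0)" using Cons.prems(2)[rule_format, of 0] ws by auto
  ultimately show ?case using ws by (auto simp: is_path_append)
qed



definition mix :: "('x \<Rightarrow> nat) \<Rightarrow> nat \<Rightarrow> ('x\<Rightarrow>bool) \<Rightarrow> ('x\<Rightarrow>bool) \<Rightarrow> 'x \<Rightarrow> bool" where
  "mix SV th S1 S2 x = (if SV x < th then S1 x else S2 x)"

definition lowe :: "('x \<Rightarrow> nat) \<Rightarrow> nat \<Rightarrow> ('n,'x) edge \<Rightarrow> bool" where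
  "lowe SV th e = (case fst (snd e) of None \<Rightarrow> True | Some (x,b) \<Rightarrow> SV x < th)"

lemma takeWhile_low: "(x,b) \<in> set (labels (takeWhile (lowe SV th) Q)) \<Longrightarrow> SV x < th"
proof (induction Q)
  case Nil then show ?case by simp
next
  case (Cons e Q)
  obtain a l b' where e: "e = (a,l,b')" by (cases e) auto
  have le: "lowe SV th e = (case l of None \<Rightarrow> True | Some (y,bb) \<Rightarrow> SV y < th)" by (simp add: lowe_def e)
  show ?case using Cons e le by (auto split: if_splits option.splits)
qed

lemma dropWhile_high: "sorted_wrt (<) (map (SV \<circ> fst) (labels Q)) \<Longrightarrow>
   (x,b) \<in> set (labels (dropWhile (lowe SV th) Q)) \<Longrightarrow> \<not> SV x < th"
proof (induction Q)
  case Nil then show ?case by simp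
next
  case (Cons e Q)
  obtain a l b' where e: "e = (a,l,b')" by (cases e) auto
  show ?case
  proof (cases "lowe SV th e")
    case True
    have "sorted_wrt (<) (map (SV \<circ> fst) (labels Q))"
      using Cons.prems(1) e by (auto simp: o_def split: if_splits)
    from Cons.IH[OF this] show ?thesis using Cons.prems(2) True by simp
  next
    case False
    then obtain y bb where l: "l = Some (y,bb)" and hy: "\<not> SV y < th" using e by (auto simp: lowe_def split: option.splits)
    have "(x,b) \<in> set (labels (e # Q))" using Cons.prems(2) False by auto
    then have "(x,b) = (y,bb) \<or> (x,b) \<in> set (labels Q)" using e l by auto
    moreover have "\<forall>z\<in>set (labels Q). SV y < SV (fst z)" using Cons.prems(1) e l by auto
    ultimately show ?thesis using hy by auto
  qed
qed

lemma labels_takeWhile_sub: "set (labels (takeWhile p Q)) \<subseteq> set (labels Q)"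
proof -
  have "labels Q = labels (takeWhile p Q) @ labels (dropWhile p Q)"
    by (metis labels_append takeWhile_dropWhile_id)
  then show ?thesis by (metis Un_upper1 set_append)
qed

lemma labels_dropWhile_sub: "set (labels (dropWhile p Q)) \<subseteq> set (labels Q)"
proof -
  have "labels Q = labels (takeWhile p Q) @ labels (dropWhile p Q)"
    by (metis labels_append takeWhile_dropWhile_id)
  then show ?thesis by (metis Un_upper2 set_append)
qed

lemma concat_pairs_length: "length (concat (map (\<lambda>Q. [f Q, g Q]) Ps)) = 2 * length Ps"
  by (induction Ps) auto

lemma concat_pairs_nth: "i < 2 * length Ps \<Longrightarrow> concat (map (\<lambda>Q. [f Q, g Q]) Ps) ! i =
   (if even i then f (Ps ! (i div 2)) else g (Ps ! (i div 2)))"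
proof (induction Ps arbitrary: i)
  case Nil then show ?case by simp
next
  case (Cons Q Ps)
  show ?case
  proof (cases i)
    case 0 then show ?thesis by simp
  next
    case (Suc i')
    show ?thesis
    proof (cases i')
      case 0 then show ?thesis using Suc by simp
    next
      case (Suc i'')
      have "i'' < 2 * length Ps" using Cons.prems \<open>i = Suc i'\<close> Suc by simp
      then show ?thesis using Cons.IH[of i''] \<open>i = Suc i'\<close> Suc by simp
    qed
  qed
qed

lemma concat_pairs_concat: "concat (concat (map (\<lambda>Q. [takeWhile p Q, dropWhile p Q]) Ps)) = concat Ps"
  by (induction Ps) auto



lemma segments:
  fixes SV :: "'x \<Rightarrow> nat"
  assumes SVord: "\<forall>P. comp_path E s t P \<longrightarrow> (\<exists>Ps. length Ps = c \<and> concat Ps = P \<and>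
                 (\<forall>Q\<in>set Ps. sorted_wrt (<) (map (SV \<circ> fst) (labels Q))))"
    and cp: "comp_path E s t P" and agree: "\<forall>(x,b)\<in>set (labels P). S x = b"
  shows "\<exists>Ls ws. length Ls = 2*c \<and> length ws = Suc (2*c) \<and> ws ! 0 = s \<and> ws ! (2*c) = t \<and>
     (\<forall>i<2*c. is_path E (ws ! i) (Ls ! i) (ws ! Suc i)) \<and>
     (\<forall>i<2*c. \<forall>(x,b)\<in>set (labels (Ls ! i)). S x = b \<and> (even i \<longleftrightarrow> SV x < th))"
proof -
  obtain Ps where Ps: "length Ps = c" "concat Ps = P"
    "\<forall>Q\<in>set Ps. sorted_wrt (<) (map (SV \<circ> fst) (labels Q))" using SVord cp by blast
  define Ls where "Ls = concat (map (\<lambda>Q. [takeWhile (lowe SV th) Q, dropWhile (lowe SV th) Q]) Ps)"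
  have lenL: "length Ls = 2*c" using Ps by (simp add: Ls_def concat_pairs_length)
  have cL: "concat Ls = P" using Ps by (simp add: Ls_def concat_pairs_concat)
  have "is_path E s (concat Ls) t" using cp cL by (simp add: comp_path_def)
  from is_path_concat[OF this] obtain ws where ws: "length ws = Suc (length Ls)" "ws ! 0 = s" "ws ! length Ls = t"
     "\<forall>i<length Ls. is_path E (ws ! i) (Ls ! i) (ws ! Suc i)" by blast
  have lab: "\<forall>(x,b)\<in>set (labels (Ls ! i)). S x = b \<and> (even i \<longleftrightarrow> SV x < th)" if i: "i < 2*c" for i
  proof (intro ballI, clarify)
    fix x b assume xb: "(x,b) \<in> set (labels (Ls ! i))"
    have idx: "i div 2 < length Ps" using i Ps by auto
    have Li: "Ls ! i = (if even i then takeWhile (lowe SV th) (Ps ! (i div 2)) else dropWhile (lowe SV th) (Ps ! (i div 2)))"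
      unfolding Ls_def using i Ps by (intro concat_pairs_nth) auto
    have sub: "set (labels (Ls ! i)) \<subseteq> set (labels (Ps ! (i div 2)))"
      using Li labels_takeWhile_sub labels_dropWhile_sub by (metis)
    have "set (labels (Ps ! (i div 2))) \<subseteq> set (labels P)"
      using idx Ps(2) nth_mem by (fastforce simp: labels_concat)
    then have "S x = b" using xb sub agree by blast
    moreover have "even i \<longleftrightarrow> SV x < th"
    proof (cases "even i")
      case True then show ?thesis using xb Li takeWhile_low by metis
    next
      case False
      have "sorted_wrt (<) (map (SV \<circ> fst) (labels (Ps ! (i div 2))))" using Ps(3) idx by auto
      then show ?thesis using xb Li False dropWhile_high by metis
    qed
    ultimately show "S x = b \<and> (even i \<longleftrightarrow> SV x < th)" by blast
  qed
  show ?thesis using lenL ws lab by (intro exI[of _ Ls] exI[of _ ws]) auto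
qed



lemma fooling:
  fixes SV :: "'x \<Rightarrow> nat" and S :: "'j \<Rightarrow> 'x \<Rightarrow> bool"
  assumes bp: "is_bp N E s t"
    and SVord: "\<forall>P. comp_path E s t P \<longrightarrow> (\<exists>Ps. length Ps = c \<and> concat Ps = P \<and>
                 (\<forall>Q\<in>set Ps. sorted_wrt (<) (map (SV \<circ> fst) (labels Q))))"
    and comp: "computes E s t G" and c1: "c \<ge> 1" and finJ: "finite J"
    and satS: "\<forall>j\<in>J. sat G (S j)"
    and fool: "\<forall>j\<in>J. \<forall>j'\<in>J. j \<noteq> j' \<longrightarrow> \<not> sat G (mix SV th (S j) (S j')) \<or> \<not> sat G (mix SV th (S j') (S j))"
  shows "card J \<le> card N ^ (2*c - 1)"
proof -
  define Good where "Good j p \<longleftrightarrow> length (fst p) = 2*c \<and> length (snd p) = Suc (2*c) \<and> snd p ! 0 = s \<and> snd p ! (2*c) = t \<and>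
     (\<forall>i<2*c. is_path E (snd p ! i) (fst p ! i) (snd p ! Suc i)) \<and>
     (\<forall>i<2*c. \<forall>(x,b)\<in>set (labels (fst p ! i)). S j x = b \<and> (even i \<longleftrightarrow> SV x < th))" for j p
  have ex: "\<forall>j\<in>J. \<exists>p. Good j p"
  proof
    fix j assume "j \<in> J"
    then have "sat G (S j)" using satS by blast
    then obtain P where "comp_path E s t P" "\<forall>(x,b)\<in>set (labels P). S j x = b"
      using comp unfolding computes_def by blast
    from segments[OF SVord this, of th] obtain Ls ws where LW: "length Ls = 2*c \<and> length ws = Suc (2*c) \<and> ws ! 0 = s \<and> ws ! (2*c) = t \<and>
     (\<forall>i<2*c. is_path E (ws ! i) (Ls ! i) (ws ! Suc i)) \<and>
     (\<forall>i<2*c. \<forall>(x,b)\<in>set (labels (Ls ! i)). S j x = b \<and> (even i \<longleftrightarrow> SV x < th))" by blast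
    show "\<exists>p. Good j p"
      using LW unfolding Good_def by (intro exI[of _ "(Ls,ws)"]) simp
  qed
  obtain pf where pf0: "\<forall>j\<in>J. Good j (pf j)" using bchoice[OF ex] by blast
  have pf: "\<forall>j\<in>J. length (fst (pf j)) = 2*c \<and> length (snd (pf j)) = Suc (2*c) \<and> snd (pf j) ! 0 = s \<and> snd (pf j) ! (2*c) = t \<and>
     (\<forall>i<2*c. is_path E (snd (pf j) ! i) (fst (pf j) ! i) (snd (pf j) ! Suc i)) \<and>
     (\<forall>i<2*c. \<forall>(x,b)\<in>set (labels (fst (pf j) ! i)). S j x = b \<and> (even i \<longleftrightarrow> SV x < th))"
    using pf0 unfolding Good_def by simp
  define sig where "sig j = take (2*c - 1) (tl (snd (pf j)))" for j
  have NE: "\<forall>(a,l,b)\<in>E. a \<in> N \<and> b \<in> N" and sN: "s \<in> N" and finN: "finite N" using bp by (auto simp: is_bp_def)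
  have wsN: "snd (pf j) ! i \<in> N" if "j \<in> J" "i \<le> 2*c" for j i
    using that(2)
  proof (induction i)
    case 0 then show ?case using pf that(1) sN by auto
  next
    case (Suc i)
    then have "snd (pf j) ! i \<in> N" by auto
    moreover have "is_path E (snd (pf j) ! i) (fst (pf j) ! i) (snd (pf j) ! Suc i)"
      using pf that(1) Suc.prems by auto
    ultimately show ?case using is_path_N NE by metis
  qed
  have sig_in: "sig j \<in> {xs. set xs \<subseteq> N \<and> length xs = 2*c - 1}" if "j \<in> J" for j
  proof -
    have "length (sig j) = 2*c - 1" using pf that c1 by (auto simp: sig_def)
    moreover have "set (sig j) \<subseteq> N"
    proof
      fix y assume "y \<in> set (sig j)"
      then obtain i where "i < length (sig j)" "sig j ! i = y" by (metis in_set_conv_nth)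
      then have "i < 2*c - 1" "y = snd (pf j) ! Suc i" using pf that c1 by (auto simp: sig_def nth_tl)
      then show "y \<in> N" using wsN[OF that, of "Suc i"] by auto
    qed
    ultimately show ?thesis by auto
  qed
  have inj: "inj_on sig J"
  proof (rule inj_onI, rule ccontr)
    fix j j' assume j: "j \<in> J" and j': "j' \<in> J" and eq: "sig j = sig j'" and ne: "j \<noteq> j'"
    define ws where "ws = snd (pf j)"
    have wseq: "snd (pf j') = ws"
    proof (rule nth_equalityI)
      show "length (snd (pf j')) = length ws" using pf j j' by (simp add: ws_def)
      fix i assume "i < length (snd (pf j'))"
      then have i: "i < Suc (2*c)" using pf j' by auto
      consider "i = 0" | "i = 2*c" | "0 < i \<and> i < 2*c" using i by linarith
      then show "snd (pf j') ! i = ws ! i"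
      proof cases
        case 1 then show ?thesis using pf j j' by (simp add: ws_def)
      next
        case 2 then show ?thesis using pf j j' by (simp add: ws_def)
      next
        case 3
        then have "sig j ! (i - 1) = ws ! i" "sig j' ! (i - 1) = snd (pf j') ! i"
          using pf j j' by (auto simp: sig_def ws_def nth_tl)
        then show ?thesis using eq by simp
      qed
    qed
    have spl: "sat G (mix SV th (S j1) (S j2))" if j1: "j1 \<in> J" and j2: "j2 \<in> J" and w1: "snd (pf j1) = ws" and w2: "snd (pf j2) = ws" for j1 j2
    proof -
      from bspec[OF pf j1] w1 have B1: "\<forall>i<2*c. is_path E (ws ! i) (fst (pf j1) ! i) (ws ! Suc i)"
        and C1: "\<forall>i<2*c. \<forall>(x,b)\<in>set (labels (fst (pf j1) ! i)). S j1 x = b \<and> (even i \<longleftrightarrow> SV x < th)"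
        and W1: "ws ! 0 = s" "ws ! (2*c) = t" "length ws = Suc (2*c)" by simp_all
      from bspec[OF pf j2] w2 have B2: "\<forall>i<2*c. is_path E (ws ! i) (fst (pf j2) ! i) (ws ! Suc i)"
        and C2: "\<forall>i<2*c. \<forall>(x,b)\<in>set (labels (fst (pf j2) ! i)). S j2 x = b \<and> (even i \<longleftrightarrow> SV x < th)"
        by simp_all
      define Ls where "Ls = map (\<lambda>i. if even i then fst (pf j1) ! i else fst (pf j2) ! i) [0..<2*c]"
      have lenLs: "length Ls = 2*c" by (simp add: Ls_def)
      have lws: "length ws = Suc (length Ls)" using W1 lenLs by simp
      have "is_path E (ws ! 0) (concat Ls) (ws ! length Ls)"
      proof (rule concat_is_path[OF lws], intro allI impI)
        fix i assume i: "i < length Ls"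
        then have Lsi: "Ls ! i = (if even i then fst (pf j1) ! i else fst (pf j2) ! i)" using lenLs by (simp add: Ls_def)
        show "is_path E (ws ! i) (Ls ! i) (ws ! Suc i)"
          using B1 B2 i lenLs Lsi by (cases "even i") simp_all
      qed
      then have path: "is_path E s (concat Ls) t" using W1 lenLs by simp
      have agr: "\<forall>(x,b)\<in>set (labels (concat Ls)). mix SV th (S j1) (S j2) x = b"
      proof (clarify)
        fix x b assume "(x,b) \<in> set (labels (concat Ls))"
        then obtain L where L: "L \<in> set Ls" "(x,b) \<in> set (labels L)" by (auto simp: labels_concat)
        then obtain i where i: "i < 2*c" "L = Ls ! i" using lenLs by (metis in_set_conv_nth)
        then have Lsi: "Ls ! i = (if even i then fst (pf j1) ! i else fst (pf j2) ! i)" by (simp add: Ls_def)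
        show "mix SV th (S j1) (S j2) x = b"
        proof (cases "even i")
          case True
          then have "(x,b) \<in> set (labels (fst (pf j1) ! i))" using L i Lsi by simp
          then have "S j1 x = b \<and> SV x < th" using C1 i True by blast
          then show ?thesis by (simp add: mix_def)
        next
          case False
          then have "(x,b) \<in> set (labels (fst (pf j2) ! i))" using L i Lsi by simp
          then have "S j2 x = b \<and> \<not> SV x < th" using C2 i False by blast
          then show ?thesis by (simp add: mix_def)
        qed
      qed
      have "consistent (concat Ls)" unfolding consistent_def
      proof
        assume "\<exists>x. (x, True) \<in> set (labels (concat Ls)) \<and> (x, False) \<in> set (labels (concat Ls))"
        then obtain x where "(x, True) \<in> set (labels (concat Ls))" "(x, False) \<in> set (labels (concat Ls))" by blast
        then have "mix SV th (S j1) (S j2) x = True" "mix SV th (S j1) (S j2) x = False" using agr by auto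
        then show False by simp
      qed
      then have "comp_path E s t (concat Ls)" using path by (simp add: comp_path_def)
      then have "\<exists>P. comp_path E s t P \<and> (\<forall>(x,b)\<in>set (labels P). mix SV th (S j1) (S j2) x = b)"
        using agr by blast
      then show ?thesis using comp unfolding computes_def by simp
    qed
    have "sat G (mix SV th (S j) (S j'))" using spl[OF j j' ws_def[symmetric] wseq] .
    moreover have "sat G (mix SV th (S j') (S j))" using spl[OF j' j wseq ws_def[symmetric]] .
    ultimately show False using fool j j' ne by blast
  qed
  have "card J = card (sig ` J)" using inj by (simp add: card_image)
  also have "\<dots> \<le> card {xs. set xs \<subseteq> N \<and> length xs = 2*c - 1}"
    using sig_in finN by (intro card_mono) (auto simp: finite_lists_length_eq)
  also have "\<dots> = card N ^ (2*c - 1)" using finN by (simp add: card_lists_length_eq)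
  finally show ?thesis .
qed



definition adjv :: "(bool list \<times> nat) \<Rightarrow> (bool list \<times> nat) \<Rightarrow> bool" where
  "adjv u v \<longleftrightarrow> u \<noteq> v \<and> (fst u = fst v \<or> tree_adj (fst u) (fst v))"

definition matching :: "((bool list \<times> nat) \<Rightarrow> nat) \<Rightarrow> nat \<Rightarrow> (bool list \<times> nat) set
   \<Rightarrow> ((bool list \<times> nat) \<times> (bool list \<times> nat)) set \<Rightarrow> bool" where
  "matching \<rho> th W P \<longleftrightarrow> finite P \<and> (\<forall>(u,v)\<in>P. u \<in> W \<and> v \<in> W \<and> \<rho> u < th \<and> \<not> \<rho> v < th \<and> adjv u v) \<and>
     (\<forall>p\<in>P. \<forall>q\<in>P. p \<noteq> q \<longrightarrow> {fst p, snd p} \<inter> {fst q, snd q} = {})"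

lemma tree_adj_sym: "tree_adj a b \<longleftrightarrow> tree_adj b a"
  by (auto simp: tree_adj_def)

lemma cross_edge:
  fixes \<rho> :: "(bool list \<times> nat) \<Rightarrow> nat"
  assumes aZ: "a \<in> Z" and cZ: "a @ [x0] \<in> Z" and pre: "\<forall>b\<in>Z. \<exists>w. b = a @ w"
    and bl: "\<forall>b\<in>Z. b \<noteq> a \<longrightarrow> butlast b \<in> Z" and ne: "\<forall>b\<in>Z. I b \<noteq> {}"
    and x: "x \<in> Sigma Z I" "\<rho> x < th" and y: "y \<in> Sigma Z I" "\<not> \<rho> y < th"
  shows "\<exists>u v. u \<in> Sigma Z I \<and> v \<in> Sigma Z I \<and> \<rho> u < th \<and> \<not> \<rho> v < th \<and> fst u \<noteq> fst v \<and> tree_adj (fst u) (fst v)"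
proof (rule ccontr)
  assume H: "\<not> ?thesis"
  have key: "(\<rho> u < th) = (\<rho> v < th)" if "u \<in> Sigma Z I" "v \<in> Sigma Z I" "fst u \<noteq> fst v" "tree_adj (fst u) (fst v)" for u v
    using H that tree_adj_sym by metis
  define rep where "rep b = (SOME i. i \<in> I b)" for b
  have rep: "rep b \<in> I b" if "b \<in> Z" for b using ne that unfolding rep_def by (simp add: some_in_eq)
  have C1: "\<forall>b\<in>Z. length b = length a + Suc m \<longrightarrow> (\<forall>i\<in>I b. (\<rho> (b,i) < th) = (\<rho> (a, rep a) < th))" for m
  proof (induction m)
    case 0
    show ?case
    proof (intro ballI impI)
      fix b i assume b: "b \<in> Z" and l: "length b = length a + Suc 0" and i: "i \<in> I b"
      obtain w where bw: "b = a @ w" using pre b by blast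
      then obtain z where "w = [z]" using l by (cases w) auto
      then have bb: "butlast b = a" "b = a @ [z]" using bw by auto
      have "tree_adj (fst (b,i)) (fst (a, rep a))" using bb by (auto simp: tree_adj_def)
      then show "(\<rho> (b,i) < th) = (\<rho> (a, rep a) < th)" using key[of "(b,i)" "(a, rep a)"] b i aZ rep bb by auto
    qed
  next
    case (Suc m)
    show ?case
    proof (intro ballI impI)
      fix b i assume b: "b \<in> Z" and l: "length b = length a + Suc (Suc m)" and i: "i \<in> I b"
      have "b \<noteq> a" using l by auto
      then have pZ: "butlast b \<in> Z" using bl b by auto
      have bne: "b \<noteq> []" using l by auto
      have lp: "length (butlast b) = length a + Suc m" using l by simp
      have "tree_adj (fst (b,i)) (fst (butlast b, rep (butlast b)))"
        using bne by (auto simp: tree_adj_def intro: exI[of _ "last b"])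
      moreover have "fst (b,i) \<noteq> fst (butlast b, rep (butlast b))" using bne
        by (metis fst_conv length_butlast lp l n_not_Suc_n add_Suc_right diff_Suc_1)
      ultimately have "(\<rho> (b,i) < th) = (\<rho> (butlast b, rep (butlast b)) < th)"
        using key[of "(b,i)" "(butlast b, rep (butlast b))"] b i pZ rep by auto
      also have "\<dots> = (\<rho> (a, rep a) < th)" using Suc pZ lp rep by auto
      finally show "(\<rho> (b,i) < th) = (\<rho> (a, rep a) < th)" .
    qed
  qed
  have C2: "(\<rho> (a,i) < th) = (\<rho> (a, rep a) < th)" if "i \<in> I a" for i
  proof -
    have "tree_adj (fst (a,i)) (fst (a @ [x0], rep (a @ [x0])))" by (auto simp: tree_adj_def)
    then have "(\<rho> (a,i) < th) = (\<rho> (a @ [x0], rep (a @ [x0])) < th)"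
      using key[of "(a,i)" "(a @ [x0], rep (a @ [x0]))"] that aZ cZ rep by auto
    also have "\<dots> = (\<rho> (a, rep a) < th)" using C1[of 0] cZ rep by auto
    finally show ?thesis .
  qed
  have all: "(\<rho> w < th) = (\<rho> (a, rep a) < th)" if wS: "w \<in> Sigma Z I" for w
  proof -
    obtain b i where w: "w = (b,i)" "b \<in> Z" "i \<in> I b" using wS by (cases w) auto
    obtain v where bv: "b = a @ v" using pre w by blast
    show ?thesis
    proof (cases v)
      case Nil then show ?thesis using C2 w bv by auto
    next
      case (Cons z v')
      then have "length b = length a + Suc (length v')" using bv by simp
      then show ?thesis using C1[of "length v'"] w by auto
    qed
  qed
  show False using all[OF x(1)] all[OF y(1)] x(2) y(2) by simp
qed



lemma matching_n:
  fixes \<rho> :: "(bool list \<times> nat) \<Rightarrow> nat"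
  assumes aZ: "a \<in> Z" and cZ: "a @ [x0] \<in> Z" and pre: "\<forall>b\<in>Z. \<exists>w. b = a @ w"
    and bl: "\<forall>b\<in>Z. b \<noteq> a \<longrightarrow> butlast b \<in> Z" and finZ: "finite Z"
  shows "\<forall>b\<in>Z. finite (I b) \<and> card (I b) \<ge> n \<Longrightarrow>
     card {w \<in> Sigma Z I. \<rho> w < th} \<ge> n \<Longrightarrow> card {w \<in> Sigma Z I. \<not> \<rho> w < th} \<ge> n \<Longrightarrow>
     \<exists>P. matching \<rho> th (Sigma Z I) P \<and> card P = n"
proof (induction n arbitrary: I)
  case 0
  show ?case by (intro exI[of _ "{}"]) (simp add: matching_def)
next
  case (Suc n)
  have finW: "finite (Sigma Z I)" using finZ Suc.prems(1) by auto
  have ne: "\<forall>b\<in>Z. I b \<noteq> {}" using Suc.prems(1) by fastforce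
  have "{w \<in> Sigma Z I. \<rho> w < th} \<noteq> {}" using Suc.prems(2) by (intro notI) simp
  then obtain x where x: "x \<in> Sigma Z I" "\<rho> x < th" by blast
  have "{w \<in> Sigma Z I. \<not> \<rho> w < th} \<noteq> {}" using Suc.prems(3) by (intro notI) simp
  then obtain y where y: "y \<in> Sigma Z I" "\<not> \<rho> y < th" by blast
  obtain u v where uv: "u \<in> Sigma Z I" "v \<in> Sigma Z I" "\<rho> u < th" "\<not> \<rho> v < th" "fst u \<noteq> fst v" "tree_adj (fst u) (fst v)"
    using cross_edge[OF aZ cZ pre bl ne x y] by blast
  define I' where "I' b = {i \<in> I b. (b,i) \<noteq> u \<and> (b,i) \<noteq> v}" for b
  have W': "Sigma Z I' = Sigma Z I - {u,v}" by (auto simp: I'_def)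
  have cI': "finite (I' b) \<and> card (I' b) \<ge> n" if b: "b \<in> Z" for b
  proof -
    have fI: "finite (I b)" "card (I b) \<ge> Suc n" using Suc.prems(1) b by auto
    have "\<exists>j. I' b \<supseteq> I b - {j}"
    proof (cases "fst u = b")
      case True
      then have "fst v \<noteq> b" using uv by auto
      then show ?thesis using True by (intro exI[of _ "snd u"]) (auto simp: I'_def prod_eq_iff)
    next
      case False
      then show ?thesis by (intro exI[of _ "snd v"]) (auto simp: I'_def prod_eq_iff)
    qed
    then obtain j where j: "I' b \<supseteq> I b - {j}" by blast
    have fI': "finite (I' b)" using fI by (auto simp: I'_def)
    have "card (I b - {j}) \<ge> n" using fI by (auto simp: card_Diff_singleton_if)
    also have "card (I b - {j}) \<le> card (I' b)" using fI' j by (intro card_mono) auto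
    finally show ?thesis using fI' by simp
  qed
  have low': "card {w \<in> Sigma Z I'. \<rho> w < th} \<ge> n"
  proof -
    have "{w \<in> Sigma Z I'. \<rho> w < th} = {w \<in> Sigma Z I. \<rho> w < th} - {u}" using W' uv by auto
    moreover have "finite {w \<in> Sigma Z I. \<rho> w < th}" using finW by auto
    ultimately show ?thesis using Suc.prems(2) uv by (simp add: card_Diff_singleton_if)
  qed
  have high': "card {w \<in> Sigma Z I'. \<not> \<rho> w < th} \<ge> n"
  proof -
    have "{w \<in> Sigma Z I'. \<not> \<rho> w < th} = {w \<in> Sigma Z I. \<not> \<rho> w < th} - {v}" using W' uv by auto
    moreover have "finite {w \<in> Sigma Z I. \<not> \<rho> w < th}" using finW by auto
    ultimately show ?thesis using Suc.prems(3) uv by (simp add: card_Diff_singleton_if)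
  qed
  obtain P where P: "matching \<rho> th (Sigma Z I') P" "card P = n"
    using Suc.IH[of I'] cI' low' high' by blast
  have uvP: "(u,v) \<notin> P" using P(1) W' unfolding matching_def by auto
  have "matching \<rho> th (Sigma Z I) (insert (u,v) P)"
    unfolding matching_def
  proof (intro conjI)
    show "finite (insert (u, v) P)" using P(1) by (simp add: matching_def)
    show "\<forall>(u', v')\<in>insert (u, v) P. u' \<in> Sigma Z I \<and> v' \<in> Sigma Z I \<and> \<rho> u' < th \<and> \<not> \<rho> v' < th \<and> adjv u' v'"
      using P(1) W' uv unfolding matching_def adjv_def by auto
    have inW': "\<forall>p\<in>P. fst p \<in> Sigma Z I' \<and> snd p \<in> Sigma Z I'" using P(1) unfolding matching_def by auto
    have d0: "\<forall>p\<in>P. \<forall>q\<in>P. p \<noteq> q \<longrightarrow> {fst p, snd p} \<inter> {fst q, snd q} = {}"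
      using P(1) unfolding matching_def by blast
    have d1: "\<forall>p\<in>P. {fst p, snd p} \<inter> {u, v} = {}" using inW' W' by blast
    show "\<forall>p\<in>insert (u, v) P. \<forall>q\<in>insert (u, v) P. p \<noteq> q \<longrightarrow> {fst p, snd p} \<inter> {fst q, snd q} = {}"
      using d0 d1 by (simp add: Int_commute) blast
  qed
  moreover have "card (insert (u,v) P) = Suc n" using P uvP by (simp add: matching_def)
  ultimately show ?case by blast
qed

lemma ivt_card:
  fixes \<rho> :: "'a \<Rightarrow> nat"
  assumes fin: "finite W" and inj: "inj_on \<rho> W" and n: "n \<le> card W"
  shows "\<exists>th. card {w \<in> W. \<rho> w < th} = n"
proof -
  define f where "f th = card {w \<in> W. \<rho> w < th}" for th
  have f0: "f 0 = 0" by (simp add: f_def)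
  have fS: "f (Suc m) \<le> Suc (f m)" for m
  proof -
    have eq: "{w \<in> W. \<rho> w < Suc m} = {w \<in> W. \<rho> w < m} \<union> {w \<in> W. \<rho> w = m}" by auto
    moreover have "card {w \<in> W. \<rho> w = m} \<le> 1"
    proof -
      have "inj_on \<rho> {w \<in> W. \<rho> w = m}" using inj by (auto intro: inj_on_subset)
      then have "card {w \<in> W. \<rho> w = m} = card (\<rho> ` {w \<in> W. \<rho> w = m})" by (rule card_image[symmetric])
      also have "\<dots> \<le> card {m}" by (intro card_mono) auto
      finally show ?thesis by simp
    qed
    have "f (Suc m) \<le> f m + card {w \<in> W. \<rho> w = m}"
      unfolding f_def eq by (rule card_Un_le)
    then show ?thesis using \<open>card {w \<in> W. \<rho> w = m} \<le> 1\<close> by simp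
  qed
  define M where "M = Suc (Max (insert 0 (\<rho> ` W)))"
  have "\<rho> w < M" if "w \<in> W" for w
  proof -
    have "\<rho> w \<le> Max (insert 0 (\<rho> ` W))" using fin that by (intro Max_ge) auto
    then show ?thesis by (simp add: M_def)
  qed
  then have "{w \<in> W. \<rho> w < M} = W" by auto
  then have fM: "f M = card W" by (simp add: f_def)
  have "\<forall>m. n \<le> f m \<longrightarrow> (\<exists>th. f th = n)"
  proof
    fix m show "n \<le> f m \<longrightarrow> (\<exists>th. f th = n)"
    proof (induction m)
      case 0 then show ?case using f0 by auto
    next
      case (Suc m)
      show ?case
      proof
        assume h: "n \<le> f (Suc m)"
        show "\<exists>th. f th = n"
        proof (cases "n \<le> f m")
          case True then show ?thesis using Suc by blast
        next
          case False then have "f (Suc m) = n" using h fS[of m] by linarith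
          then show ?thesis by blast
        qed
      qed
    qed
  qed
  then have "\<exists>th. f th = n" using fM n by metis
  then show ?thesis unfolding f_def .
qed



definition sub :: "bool list \<Rightarrow> nat \<Rightarrow> bool list set" where
  "sub a h = {b. \<exists>w. b = a @ w \<and> length w \<le> h}"

definition Vs :: "nat \<Rightarrow> bool list \<Rightarrow> nat \<Rightarrow> (bool list \<times> nat) set" where
  "Vs k a h = Sigma (sub a h) (\<lambda>_. {..<k})"

lemma finite_sub: "finite (sub a h)"
proof -
  have "sub a h = (\<lambda>w. a @ w) ` {w. set w \<subseteq> UNIV \<and> length w \<le> h}" by (auto simp: sub_def)
  then show ?thesis using finite_lists_length_le[of "UNIV::bool set" h] by simp
qed

lemma finite_Vs: "finite (Vs k a h)" by (simp add: Vs_def finite_sub)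

lemma sub_self: "a \<in> sub a h" by (auto simp: sub_def intro: exI[of _ "[]"])

lemma sub_child: "h \<ge> 1 \<Longrightarrow> a @ [x] \<in> sub a h" by (auto simp: sub_def)

lemma sub_prefix: "b \<in> sub a h \<Longrightarrow> \<exists>w. b = a @ w" by (auto simp: sub_def)

lemma sub_butlast: "b \<in> sub a h \<Longrightarrow> b \<noteq> a \<Longrightarrow> butlast b \<in> sub a h"
proof -
  assume "b \<in> sub a h" "b \<noteq> a"
  then obtain w where "b = a @ w" "length w \<le> h" "w \<noteq> []" by (auto simp: sub_def)
  then show ?thesis by (auto simp: sub_def butlast_append intro!: exI[of _ "butlast w"])
qed

lemma sub_len: "b \<in> sub a h \<Longrightarrow> length b \<le> length a + h \<and> length a \<le> length b"
  by (auto simp: sub_def)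

lemma sub_mono2: "sub (a @ [x,y]) h \<subseteq> sub a (h + 2)"
proof
  fix b assume "b \<in> sub (a @ [x,y]) h"
  then obtain w where "b = a @ [x,y] @ w" "length w \<le> h" by (auto simp: sub_def)
  then show "b \<in> sub a (h + 2)" unfolding sub_def by (intro CollectI exI[of _ "[x,y] @ w"]) simp
qed

lemma sub_mono1: "sub (a @ [x]) h \<subseteq> sub a (Suc h)"
proof
  fix b assume "b \<in> sub (a @ [x]) h"
  then obtain w where "b = a @ [x] @ w" "length w \<le> h" by (auto simp: sub_def)
  then show "b \<in> sub a (Suc h)" unfolding sub_def by (intro CollectI exI[of _ "[x] @ w"]) simp
qed

lemma sub_disj: "length d = length d' \<Longrightarrow> d \<noteq> d' \<Longrightarrow> sub d h \<inter> sub d' h = {}"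
proof (rule ccontr)
  assume l: "length d = length d'" and ne: "d \<noteq> d'" and "sub d h \<inter> sub d' h \<noteq> {}"
  then obtain w w' where "d @ w = d' @ w'" by (auto simp: sub_def)
  then have "take (length d) (d @ w) = take (length d') (d' @ w')" using l by simp
  then show False using ne by simp
qed

lemma Vs_mono: "sub a h \<subseteq> sub a' h' \<Longrightarrow> Vs k a h \<subseteq> Vs k a' h'"
  by (auto simp: Vs_def)

lemma Vs_disj: "length d = length d' \<Longrightarrow> d \<noteq> d' \<Longrightarrow> Vs k d h \<inter> Vs k d' h = {}"
  using sub_disj[of d d' h] by (auto simp: Vs_def)

lemma matching_mono: "matching \<rho> th W P \<Longrightarrow> W \<subseteq> W' \<Longrightarrow> matching \<rho> th W' P"
  unfolding matching_def by blast

lemma matching_union: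
  assumes "matching \<rho> th W1 P1" "matching \<rho> th W2 P2" "W1 \<inter> W2 = {}"
  shows "matching \<rho> th (W1 \<union> W2) (P1 \<union> P2) \<and> card (P1 \<union> P2) = card P1 + card P2"
proof -
  have c1: "\<forall>(u,v)\<in>P1. u \<in> W1 \<and> v \<in> W1 \<and> \<rho> u < th \<and> \<not> \<rho> v < th \<and> adjv u v"
   and f1: "finite P1"
   and d1: "\<forall>p\<in>P1. \<forall>q\<in>P1. p \<noteq> q \<longrightarrow> {fst p, snd p} \<inter> {fst q, snd q} = {}"
    using assms(1) unfolding matching_def by blast+
  have c2: "\<forall>(u,v)\<in>P2. u \<in> W2 \<and> v \<in> W2 \<and> \<rho> u < th \<and> \<not> \<rho> v < th \<and> adjv u v"
   and f2: "finite P2"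
   and d2: "\<forall>p\<in>P2. \<forall>q\<in>P2. p \<noteq> q \<longrightarrow> {fst p, snd p} \<inter> {fst q, snd q} = {}"
    using assms(2) unfolding matching_def by blast+
  have in1: "fst p \<in> W1 \<and> snd p \<in> W1" if "p \<in> P1" for p using c1 that by (cases p) auto
  have in2: "fst p \<in> W2 \<and> snd p \<in> W2" if "p \<in> P2" for p using c2 that by (cases p) auto
  have disj: "P1 \<inter> P2 = {}"
  proof (rule ccontr)
    assume "P1 \<inter> P2 \<noteq> {}"
    then obtain p where "p \<in> P1" "p \<in> P2" by blast
    then show False using in1 in2 assms(3) by (meson disjoint_iff)
  qed
  have nW: "x \<notin> W2" if "x \<in> W1" for x using assms(3) that by blast
  have d3: "{fst p, snd p} \<inter> {fst q, snd q} = {}" if "p \<in> P1" "q \<in> P2" for p q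
    using in1[OF that(1)] in2[OF that(2)] by (auto dest: nW)
  have "matching \<rho> th (W1 \<union> W2) (P1 \<union> P2)"
    unfolding matching_def
  proof (intro conjI)
    show "finite (P1 \<union> P2)" using f1 f2 by simp
    show "\<forall>(u, v)\<in>P1 \<union> P2. u \<in> W1 \<union> W2 \<and> v \<in> W1 \<union> W2 \<and> \<rho> u < th \<and> \<not> \<rho> v < th \<and> adjv u v"
      using c1 c2 by auto
    show "\<forall>p\<in>P1 \<union> P2. \<forall>q\<in>P1 \<union> P2. p \<noteq> q \<longrightarrow> {fst p, snd p} \<inter> {fst q, snd q} = {}"
    proof (intro ballI impI)
      fix p q assume p: "p \<in> P1 \<union> P2" and q: "q \<in> P1 \<union> P2" and pq: "p \<noteq> q"
      show "{fst p, snd p} \<inter> {fst q, snd q} = {}"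
      proof (cases "p \<in> P1")
        case True
        show ?thesis
        proof (cases "q \<in> P1")
          case True then show ?thesis using d1 \<open>p \<in> P1\<close> pq by blast
        next
          case False then have "q \<in> P2" using q by blast
          then show ?thesis using d3 \<open>p \<in> P1\<close> by blast
        qed
      next
        case False then have p2: "p \<in> P2" using p by blast
        show ?thesis
        proof (cases "q \<in> P1")
          case True then show ?thesis using d3[OF True p2] by blast
        next
          case False then have "q \<in> P2" using q by blast
          then show ?thesis using d2 p2 pq by blast
        qed
      qed
    qed
  qed
  moreover have "card (P1 \<union> P2) = card P1 + card P2" using f1 f2 disj by (simp add: card_Un_disjoint)
  ultimately show ?thesis by blast
qed



lemma region_props:
  fixes a :: "bool list" and q1 q2 :: bool and h' :: nat
  assumes Z_def: "Z = sub a (h' + 2) - sub (a @ [q1,q2]) h'"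
  shows "a \<in> Z" "a @ [\<not> q1] \<in> Z" "\<forall>b\<in>Z. \<exists>w. b = a @ w" "\<forall>b\<in>Z. b \<noteq> a \<longrightarrow> butlast b \<in> Z" "finite Z"
proof -
  have nin: "b \<notin> sub (a @ [q1,q2]) h'" if "length b < length a + 2" for b
    using that by (auto simp: sub_def)
  show "a \<in> Z" unfolding Z_def using sub_self nin by auto
  have "a @ [\<not> q1] \<notin> sub (a @ [q1,q2]) h'" by (auto simp: sub_def)
  then show "a @ [\<not> q1] \<in> Z" unfolding Z_def using sub_child[of "h'+2" a] by auto
  show "\<forall>b\<in>Z. \<exists>w. b = a @ w" unfolding Z_def using sub_prefix by blast
  show "finite Z" unfolding Z_def using finite_sub by auto
  show "\<forall>b\<in>Z. b \<noteq> a \<longrightarrow> butlast b \<in> Z"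
  proof (intro ballI impI)
    fix b assume bZ: "b \<in> Z" and ba: "b \<noteq> a"
    then have b1: "b \<in> sub a (h'+2)" and b2: "b \<notin> sub (a @ [q1,q2]) h'" unfolding Z_def by auto
    have "butlast b \<in> sub a (h'+2)" using sub_butlast[OF b1 ba] .
    moreover have "butlast b \<notin> sub (a @ [q1,q2]) h'"
    proof
      assume "butlast b \<in> sub (a @ [q1,q2]) h'"
      then obtain w where w: "butlast b = a @ [q1,q2] @ w" "length w \<le> h'" by (auto simp: sub_def)
      obtain v where v: "b = a @ v" "length v \<le> h' + 2" using b1 by (auto simp: sub_def)
      have "b \<noteq> []" using ba v by auto
      then have "b = butlast b @ [last b]" by simp
      then have bb: "b = a @ [q1,q2] @ (w @ [last b])" using w by simp
      have l1: "length b = length a + length v" using v by simp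
      have "length b = length (a @ [q1,q2] @ (w @ [last b]))" using bb by (rule arg_cong)
      then have l2: "length b = length a + 3 + length w" by simp
      have "length (w @ [last b]) \<le> h'" using l1 l2 v(2) by simp
      then have "b \<in> sub (a @ [q1,q2]) h'" using bb unfolding sub_def
        by (intro CollectI exI[of _ "w @ [last b]"]) simp
      then show False using b2 by blast
    qed
    ultimately show "butlast b \<in> Z" unfolding Z_def by blast
  qed
qed

lemma step_core:
  fixes \<rho> :: "(bool list \<times> nat) \<Rightarrow> nat"
  assumes k: "k \<ge> 1"
    and ij: "[p1,p2] \<noteq> [q1,q2]" and lj: "[s1,s2] \<noteq> [q1,q2]"
    and Pj: "matching \<rho> thj (Vs k (a @ [q1,q2]) h') Pj" "g \<le> card Pj"
    and lowi: "k \<le> card {w \<in> Vs k (a @ [p1,p2]) h'. \<rho> w < thi}" "thi \<le> thj"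
    and highl: "k \<le> card {w \<in> Vs k (a @ [s1,s2]) h'. \<not> \<rho> w < thl}" "thj \<le> thl"
  shows "\<exists>th P. matching \<rho> th (Vs k a (h'+2)) P \<and> g + k \<le> card P \<and>
          k \<le> card {w \<in> Vs k a (h'+2). \<rho> w < th} \<and> k \<le> card {w \<in> Vs k a (h'+2). \<not> \<rho> w < th}"
proof -
  define Z where "Z = sub a (h' + 2) - sub (a @ [q1,q2]) h'"
  note R = region_props[OF Z_def]
  define W where "W = Sigma Z (\<lambda>_. {..<k::nat})"
  have W: "W = Vs k a (h'+2) - Vs k (a @ [q1,q2]) h'" by (auto simp: W_def Z_def Vs_def)
  have finW: "finite W" using R(5) by (simp add: W_def)
  have di_sub: "Vs k (a @ [p1,p2]) h' \<subseteq> W"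
  proof -
    have "Vs k (a @ [p1,p2]) h' \<subseteq> Vs k a (h'+2)" using sub_mono2 by (intro Vs_mono)
    moreover have "Vs k (a @ [p1,p2]) h' \<inter> Vs k (a @ [q1,q2]) h' = {}" using ij by (intro Vs_disj) auto
    ultimately show ?thesis unfolding W by blast
  qed
  have dl_sub: "Vs k (a @ [s1,s2]) h' \<subseteq> W"
  proof -
    have "Vs k (a @ [s1,s2]) h' \<subseteq> Vs k a (h'+2)" using sub_mono2 by (intro Vs_mono)
    moreover have "Vs k (a @ [s1,s2]) h' \<inter> Vs k (a @ [q1,q2]) h' = {}" using lj by (intro Vs_disj) auto
    ultimately show ?thesis unfolding W by blast
  qed
  have lowW: "k \<le> card {w \<in> W. \<rho> w < thj}"
  proof -
    have "{w \<in> Vs k (a @ [p1,p2]) h'. \<rho> w < thi} \<subseteq> {w \<in> W. \<rho> w < thj}" using di_sub lowi(2) by auto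
    then have "card {w \<in> Vs k (a @ [p1,p2]) h'. \<rho> w < thi} \<le> card {w \<in> W. \<rho> w < thj}"
      using finW by (intro card_mono) auto
    then show ?thesis using lowi(1) by linarith
  qed
  have highW: "k \<le> card {w \<in> W. \<not> \<rho> w < thj}"
  proof -
    have "{w \<in> Vs k (a @ [s1,s2]) h'. \<not> \<rho> w < thl} \<subseteq> {w \<in> W. \<not> \<rho> w < thj}" using dl_sub highl(2) by auto
    then have "card {w \<in> Vs k (a @ [s1,s2]) h'. \<not> \<rho> w < thl} \<le> card {w \<in> W. \<not> \<rho> w < thj}"
      using finW by (intro card_mono) auto
    then show ?thesis using highl(1) by linarith
  qed
  obtain Q where Q: "matching \<rho> thj W Q" "card Q = k"
    using matching_n[OF R(1) R(2) R(3) R(4) R(5), of "\<lambda>_. {..<k}" k \<rho> thj] lowW highW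
    unfolding W_def by auto
  have disjW: "Vs k (a @ [q1,q2]) h' \<inter> W = {}" unfolding W by blast
  from matching_union[OF Pj(1) Q(1) disjW]
  have U: "matching \<rho> thj (Vs k (a @ [q1,q2]) h' \<union> W) (Pj \<union> Q)" "card (Pj \<union> Q) = card Pj + card Q" by auto
  have sub1: "Vs k (a @ [q1,q2]) h' \<union> W \<subseteq> Vs k a (h'+2)" using sub_mono2 Vs_mono W by blast
  have M: "matching \<rho> thj (Vs k a (h'+2)) (Pj \<union> Q)" using matching_mono[OF U(1) sub1] .
  have W2: "W \<subseteq> Vs k a (h'+2)" using W by blast
  have fV: "finite (Vs k a (h'+2))" by (rule finite_Vs)
  have "card {w \<in> W. \<rho> w < thj} \<le> card {w \<in> Vs k a (h'+2). \<rho> w < thj}"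
    using W2 fV by (intro card_mono) auto
  moreover have "card {w \<in> W. \<not> \<rho> w < thj} \<le> card {w \<in> Vs k a (h'+2). \<not> \<rho> w < thj}"
    using W2 fV by (intro card_mono) auto
  ultimately show ?thesis using M U(2) Q(2) Pj(2) lowW highW
    by (intro exI[of _ thj] exI[of _ "Pj \<union> Q"]) auto
qed



lemma card_split_filter: "finite W \<Longrightarrow> card {w \<in> W. P w} + card {w \<in> W. \<not> P w} = card W"
proof -
  assume f: "finite W"
  have "W = {w \<in> W. P w} \<union> {w \<in> W. \<not> P w}" by auto
  moreover have "card ({w \<in> W. P w} \<union> {w \<in> W. \<not> P w}) = card {w \<in> W. P w} + card {w \<in> W. \<not> P w}"
    using f by (intro card_Un_disjoint) auto
  ultimately show ?thesis by simp
qed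

lemma main_ind:
  fixes \<rho> :: "(bool list \<times> nat) \<Rightarrow> nat"
  assumes k: "k \<ge> 1" and inj: "inj_on \<rho> (CT_vertices r k)"
  shows "1 \<le> h \<Longrightarrow> length a + h \<le> r \<Longrightarrow> \<exists>th P. matching \<rho> th (Vs k a h) P \<and> ((h+1) div 2)*k \<le> card P \<and>
     k \<le> card {w \<in> Vs k a h. \<rho> w < th} \<and> k \<le> card {w \<in> Vs k a h. \<not> \<rho> w < th}"
proof (induction h arbitrary: a rule: less_induct)
  case (less h)
  have "h = 1 \<or> h = 2 \<or> (h - 2 \<ge> 1 \<and> h = (h - 2) + 2)" using less.prems(1) by arith
  then consider "h = 1" | "h = 2" | h' where "h = h' + 2" "h' \<ge> 1" by blast
  then show ?case
  proof cases
    case 1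
    have VCT: "Vs k a 1 \<subseteq> CT_vertices r k"
      using less.prems(2) 1 by (auto simp: Vs_def CT_vertices_def tree_nodes_def dest!: sub_len)
    have fV: "finite (Vs k a 1)" by (rule finite_Vs)
    have "{a, a @ [False]} \<times> {..<k} \<subseteq> Vs k a 1"
      using sub_self[of a 1] sub_child[of 1 a False] by (auto simp: Vs_def)
    then have "card ({a, a @ [False]} \<times> {..<k}) \<le> card (Vs k a 1)" using fV by (intro card_mono)
    then have cV: "2 * k \<le> card (Vs k a 1)" by (simp add: card_cartesian_product)
    obtain th where th: "card {w \<in> Vs k a 1. \<rho> w < th} = k"
      using ivt_card[OF fV inj_on_subset[OF inj VCT], of k] cV by auto
    have hi: "k \<le> card {w \<in> Vs k a 1. \<not> \<rho> w < th}"
      using card_split_filter[OF fV, of "\<lambda>w. \<rho> w < th"] th cV by linarith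
    define Z where "Z = sub a 1"
    have R: "a \<in> Z" "a @ [False] \<in> Z" "\<forall>b\<in>Z. \<exists>w. b = a @ w" "\<forall>b\<in>Z. b \<noteq> a \<longrightarrow> butlast b \<in> Z" "finite Z"
      unfolding Z_def using sub_self sub_child[of 1 a False] sub_prefix sub_butlast finite_sub by auto
    obtain P where P: "matching \<rho> th (Sigma Z (\<lambda>_. {..<k})) P" "card P = k"
      using matching_n[OF R, of "\<lambda>_. {..<k}" k \<rho> th] th hi unfolding Z_def Vs_def by auto
    show ?thesis using P th hi 1 unfolding Z_def Vs_def by (intro exI[of _ th] exI[of _ P]) auto
  next
    case 2
    obtain th P where P: "matching \<rho> th (Vs k (a @ [False]) 1) P" "((1+1) div 2)*k \<le> card P"
      "k \<le> card {w \<in> Vs k (a @ [False]) 1. \<rho> w < th}" "k \<le> card {w \<in> Vs k (a @ [False]) 1. \<not> \<rho> w < th}"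
      using less.IH[of 1 "a @ [False]"] less.prems 2 by auto
    have sub: "Vs k (a @ [False]) 1 \<subseteq> Vs k a h" using 2 sub_mono1[of a False 1] by (intro Vs_mono) (simp add: numeral_2_eq_2)
    have fV: "finite (Vs k a h)" by (rule finite_Vs)
    have "card {w \<in> Vs k (a @ [False]) 1. \<rho> w < th} \<le> card {w \<in> Vs k a h. \<rho> w < th}"
      using sub fV by (intro card_mono) auto
    moreover have "card {w \<in> Vs k (a @ [False]) 1. \<not> \<rho> w < th} \<le> card {w \<in> Vs k a h. \<not> \<rho> w < th}"
      using sub fV by (intro card_mono) auto
    ultimately show ?thesis using P matching_mono[OF P(1) sub] 2
      by (intro exI[of _ th] exI[of _ P]) auto
  next
    case 3
    define g where "g = ((h'+1) div 2) * k"
    have gh: "((h+1) div 2) * k = g + k" using 3 by (simp add: g_def)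
    have IH: "\<exists>th P. matching \<rho> th (Vs k (a @ [x,y]) h') P \<and> g \<le> card P \<and>
       k \<le> card {w \<in> Vs k (a @ [x,y]) h'. \<rho> w < th} \<and> k \<le> card {w \<in> Vs k (a @ [x,y]) h'. \<not> \<rho> w < th}" for x y
      using less.IH[of h' "a @ [x,y]"] less.prems 3 unfolding g_def by auto
    obtain th1 P1 where A1: "matching \<rho> th1 (Vs k (a @ [False,False]) h') P1" "g \<le> card P1"
       "k \<le> card {w \<in> Vs k (a @ [False,False]) h'. \<rho> w < th1}" "k \<le> card {w \<in> Vs k (a @ [False,False]) h'. \<not> \<rho> w < th1}"
      using IH[of False False] by blast
    obtain th2 P2 where A2: "matching \<rho> th2 (Vs k (a @ [False,True]) h') P2" "g \<le> card P2"
       "k \<le> card {w \<in> Vs k (a @ [False,True]) h'. \<rho> w < th2}" "k \<le> card {w \<in> Vs k (a @ [False,True]) h'. \<not> \<rho> w < th2}"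
      using IH[of False True] by blast
    obtain th3 P3 where A3: "matching \<rho> th3 (Vs k (a @ [True,False]) h') P3" "g \<le> card P3"
       "k \<le> card {w \<in> Vs k (a @ [True,False]) h'. \<rho> w < th3}" "k \<le> card {w \<in> Vs k (a @ [True,False]) h'. \<not> \<rho> w < th3}"
      using IH[of True False] by blast
    have C: "\<exists>th P. matching \<rho> th (Vs k a (h'+2)) P \<and> g + k \<le> card P \<and>
          k \<le> card {w \<in> Vs k a (h'+2). \<rho> w < th} \<and> k \<le> card {w \<in> Vs k a (h'+2). \<not> \<rho> w < th}"
    proof -
      consider "th1 \<le> th2 \<and> th2 \<le> th3" | "th1 \<le> th3 \<and> th3 \<le> th2" | "th2 \<le> th1 \<and> th1 \<le> th3"
        | "th2 \<le> th3 \<and> th3 \<le> th1" | "th3 \<le> th1 \<and> th1 \<le> th2" | "th3 \<le> th2 \<and> th2 \<le> th1" by linarith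
      then show ?thesis
      proof cases
        case 1 show ?thesis using step_core[OF k _ _ A2(1,2) A1(3) _ A3(4)] 1 by simp
      next
        case 2 show ?thesis using step_core[OF k _ _ A3(1,2) A1(3) _ A2(4)] 2 by simp
      next
        case 3 show ?thesis using step_core[OF k _ _ A1(1,2) A2(3) _ A3(4)] 3 by simp
      next
        case 4 show ?thesis using step_core[OF k _ _ A3(1,2) A2(3) _ A1(4)] 4 by simp
      next
        case 5 show ?thesis using step_core[OF k _ _ A1(1,2) A3(3) _ A2(4)] 5 by simp
      next
        case 6 show ?thesis using step_core[OF k _ _ A2(1,2) A3(3) _ A1(4)] 6 by simp
      qed
    qed
    then show ?thesis using gh 3 by (simp add: add.commute)
  qed
qed



definition ST :: "((bool list \<times> nat) \<times> (bool list \<times> nat)) set \<Rightarrow> ((bool list \<times> nat) \<times> (bool list \<times> nat)) set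
   \<Rightarrow> (bool list \<times> nat) gvar \<Rightarrow> bool" where
  "ST P T x = (case x of VarV w \<Rightarrow> \<not> ((\<exists>v. (w,v) \<in> T) \<or> (\<exists>u. (u,w) \<in> P - T))
                         | VarE e \<Rightarrow> (\<forall>(u,v)\<in>P. e \<noteq> {u,v}))"

lemma F_clause: "{u,v} \<in> CT_edges r k \<Longrightarrow> u \<noteq> v \<Longrightarrow> {(VarV u, True), (VarE {u,v}, True), (VarV v, True)} \<in> F r k"
  unfolding F_def cnf_of_graph_def by blast

lemma F_clauseE: "C \<in> F r k \<Longrightarrow> \<exists>u v. C = {(VarV u, True), (VarE {u,v}, True), (VarV v, True)} \<and> {u,v} \<in> CT_edges r k \<and> u \<noteq> v"
  unfolding F_def cnf_of_graph_def by blast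

lemma adj_edge: "u \<in> CT_vertices r k \<Longrightarrow> v \<in> CT_vertices r k \<Longrightarrow> adjv u v \<Longrightarrow> {u,v} \<in> CT_edges r k"
  unfolding CT_edges_def adjv_def by blast

lemma share:
  assumes "matching \<rho> th W P" "p \<in> P" "q \<in> P" "z \<in> {fst p, snd p}" "z \<in> {fst q, snd q}"
  shows "p = q"
proof (rule ccontr)
  assume "p \<noteq> q"
  then have "{fst p, snd p} \<inter> {fst q, snd q} = {}" using assms(1-3) unfolding matching_def by blast
  then show False using assms(4,5) by blast
qed

lemma pair_ne: "matching \<rho> th W P \<Longrightarrow> (u,v) \<in> P \<Longrightarrow> u \<noteq> v"
  unfolding matching_def adjv_def by fastforce

lemma ST_sat:
  assumes M: "matching \<rho> th W P" and T: "T \<subseteq> P"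
  shows "sat (F r k) (ST P T)"
  unfolding sat_def
proof
  fix C assume "C \<in> F r k"
  then obtain u v where C: "C = {(VarV u, True), (VarE {u,v}, True), (VarV v, True)}" "u \<noteq> v"
    using F_clauseE by blast
  show "\<exists>(x, b)\<in>C. ST P T x = b"
  proof (cases "\<forall>(u',v')\<in>P. {u,v} \<noteq> {u',v'}")
    case True
    then have "ST P T (VarE {u,v}) = True" by (simp add: ST_def)
    then show ?thesis using C by auto
  next
    case False
    then obtain u' v' where p: "(u',v') \<in> P" "{u,v} = {u',v'}" by auto
    have ne: "u' \<noteq> v'" using pair_ne[OF M p(1)] .
    show ?thesis
    proof (cases "(u',v') \<in> T")
      case True
      have "ST P T (VarV v') = True"
      proof -
        have "\<not> (\<exists>z. (v',z) \<in> T)"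
        proof
          assume "\<exists>z. (v',z) \<in> T"
          then obtain z where "(v',z) \<in> T" by blast
          then have "(v',z) = (u',v')" using share[OF M _ p(1), of "(v',z)" v'] T by auto
          then show False using ne by simp
        qed
        moreover have "\<not> (\<exists>z. (z,v') \<in> P - T)"
        proof
          assume "\<exists>z. (z,v') \<in> P - T"
          then obtain z where z: "(z,v') \<in> P" "(z,v') \<notin> T" by blast
          then have "(z,v') = (u',v')" using share[OF M z(1) p(1), of v'] by auto
          then show False using z True by simp
        qed
        ultimately show ?thesis by (simp add: ST_def)
      qed
      moreover have "(VarV v', True) \<in> C" using C p(2) by (auto simp: doubleton_eq_iff)
      ultimately show ?thesis by force
    next
      case False
      have "ST P T (VarV u') = True"
      proof -
        have "\<not> (\<exists>z. (u',z) \<in> T)"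
        proof
          assume "\<exists>z. (u',z) \<in> T"
          then obtain z where z: "(u',z) \<in> T" by blast
          then have "(u',z) = (u',v')" using share[OF M _ p(1), of "(u',z)" u'] T by auto
          then show False using z False by simp
        qed
        moreover have "\<not> (\<exists>z. (z,u') \<in> P - T)"
        proof
          assume "\<exists>z. (z,u') \<in> P - T"
          then obtain z where z: "(z,u') \<in> P" by blast
          then have "(z,u') = (u',v')" using share[OF M z(1) p(1), of u'] by auto
          then show False using ne by simp
        qed
        ultimately show ?thesis by (simp add: ST_def)
      qed
      moreover have "(VarV u', True) \<in> C" using C p(2) by (auto simp: doubleton_eq_iff)
      ultimately show ?thesis by force
    qed
  qed
qed

lemma mix_unsat:
  fixes SV :: "(bool list \<times> nat) gvar \<Rightarrow> nat"
  assumes M: "matching (\<lambda>w. SV (VarV w)) th W P" and WCT: "W \<subseteq> CT_vertices r k"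
    and T: "T \<subseteq> P" "T' \<subseteq> P" and uv: "(u,v) \<in> T" "(u,v) \<notin> T'"
  shows "\<not> sat (F r k) (mix SV th (ST P T) (ST P T'))"
proof
  assume sat: "sat (F r k) (mix SV th (ST P T) (ST P T'))"
  have uvP: "(u,v) \<in> P" using uv T by auto
  have props: "u \<in> W" "v \<in> W" "SV (VarV u) < th" "\<not> SV (VarV v) < th" "adjv u v"
    using M uvP unfolding matching_def by auto
  have "{u,v} \<in> CT_edges r k" using adj_edge props WCT by blast
  moreover have "u \<noteq> v" using props(5) by (simp add: adjv_def)
  ultimately have CF: "{(VarV u, True), (VarE {u,v}, True), (VarV v, True)} \<in> F r k" by (rule F_clause)
  have e: "\<exists>z. (u,z) \<in> T" using uv by blast
  have 1: "mix SV th (ST P T) (ST P T') (VarV u) = False" using props(3) e by (simp add: mix_def ST_def)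
  have e2: "\<exists>z. (z,v) \<in> P - T'" using uv uvP by blast
  have 2: "mix SV th (ST P T) (ST P T') (VarV v) = False" using props(4) e2 by (simp add: mix_def ST_def)
  have 3: "mix SV th (ST P T) (ST P T') (VarE {u,v}) = False" using uvP by (auto simp: mix_def ST_def)
  show False using sat CF 1 2 3 unfolding sat_def by fastforce
qed

lemma vert_prog:
  assumes comp: "computes E s t (F r k)" and r: "r \<ge> 1" and w: "w \<in> CT_vertices r k"
  shows "VarV w \<in> prog_vars E"
proof (rule ccontr)
  assume nw: "VarV w \<notin> prog_vars E"
  obtain b i where wb: "w = (b,i)" by (cases w)
  define u where "u = (if b = [] then ([False], i) else (butlast b, i))"
  have lb: "length b \<le> r" "i < k" using w wb by (auto simp: CT_vertices_def tree_nodes_def)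
  have uCT: "u \<in> CT_vertices r k" using lb r by (auto simp: u_def CT_vertices_def tree_nodes_def)
  have ta: "tree_adj (fst u) (fst w)"
  proof (cases "b = []")
    case True then show ?thesis using wb by (auto simp: u_def tree_adj_def)
  next
    case False
    then have "b = butlast b @ [last b]" by simp
    then show ?thesis using wb False unfolding u_def tree_adj_def by (metis fst_conv)
  qed
  have uw: "u \<noteq> w" using ta by (auto simp: tree_adj_def)
  have E1: "{w,u} \<in> CT_edges r k" using adj_edge[OF w uCT] uw ta tree_adj_sym by (auto simp: adjv_def)
  define S1 where "S1 x = (x \<noteq> VarV w \<and> x \<noteq> VarE {w,u} \<and> x \<noteq> VarV u)" for x
  define S2 where "S2 = S1(VarV w := True)"
  have CF: "{(VarV w, True), (VarE {w,u}, True), (VarV u, True)} \<in> F r k" using F_clause[OF E1] uw by auto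
  have ns1: "\<not> sat (F r k) S1" using CF unfolding sat_def S1_def by fastforce
  have s2: "sat (F r k) S2" unfolding sat_def
  proof
    fix C assume "C \<in> F r k"
    then obtain p q where C: "C = {(VarV p, True), (VarE {p,q}, True), (VarV q, True)}" using F_clauseE by blast
    show "\<exists>(x, b)\<in>C. S2 x = b"
    proof (cases "{p,q} = {w,u}")
      case True
      then have "w = p \<or> w = q" by (auto simp: doubleton_eq_iff)
      then have "(VarV w, True) \<in> C" using C by auto
      moreover have "S2 (VarV w) = True" by (simp add: S2_def)
      ultimately show ?thesis by force
    next
      case False
      then have "S2 (VarE {p,q}) = True" by (simp add: S2_def S1_def)
      then show ?thesis using C by force
    qed
  qed
  then obtain P where P: "comp_path E s t P" "\<forall>(x,b)\<in>set (labels P). S2 x = b" using comp unfolding computes_def by blast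
  have "\<forall>(x,b)\<in>set (labels P). S1 x = b"
  proof clarify
    fix x b assume xb: "(x,b) \<in> set (labels P)"
    have "is_path E s P t" using P(1) by (simp add: comp_path_def)
    from is_path_labels_vars[OF this xb] have "x \<in> prog_vars E" .
    then have "x \<noteq> VarV w" using nw by blast
    then show "S1 x = b" using P(2) xb by (auto simp: S2_def)
  qed
  then have "sat (F r k) S1" using comp P(1) unfolding computes_def by blast
  then show False using ns1 by blast
qed



lemma final_arith:
  fixes n m r k c :: nat
  assumes c: "c \<ge> 1" and n: "n \<ge> 1" and pw: "2 ^ m \<le> n ^ (2*c - 1)" and rk: "r * k \<le> 2 * m"
  shows "2 powr (real (r * k) / real (4 * c - 2)) \<le> real n"
proof -
  define e where "e = 2*c - 1"
  have e1: "e \<ge> 1" using c by (simp add: e_def)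
  have re: "real (4 * c - 2) = 2 * real e" using c by (simp add: e_def of_nat_diff)
  have "real (r * k) / real (4 * c - 2) \<le> real m / real e"
    using rk e1 re by (simp add: field_simps) (metis of_nat_le_iff of_nat_mult of_nat_numeral)
  then have "2 powr (real (r * k) / real (4 * c - 2)) \<le> 2 powr (real m / real e)" by simp
  also have "\<dots> = (2 powr real m) powr (1 / real e)" by (simp add: powr_powr)
  also have "\<dots> = (2 ^ m) powr (1 / real e)" by (simp add: powr_realpow)
  also have "\<dots> \<le> (real n ^ e) powr (1 / real e)"
  proof (rule powr_mono2)
    show "0 \<le> 1 / real e" by simp
    show "0 \<le> (2::real) ^ m" by simp
    have "real (2 ^ m) \<le> real (n ^ e)" using pw unfolding e_def of_nat_le_iff .
    then show "(2::real) ^ m \<le> real n ^ e" by (simp only: of_nat_power of_nat_numeral)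
  qed
  also have "\<dots> = real n"
  proof -
    have np: "0 < real n" using n by simp
    have "real n ^ e = real n powr real e" using np by (simp add: powr_realpow)
    then have "(real n ^ e) powr (1 / real e) = real n powr (real e * (1 / real e))" by (simp add: powr_powr)
    also have "\<dots> = real n" using e1 np by simp
    finally show ?thesis .
  qed
  finally show ?thesis .
qed

theorem theorem1:
  fixes c r k :: nat
    and N :: "'n set" and E :: "('n, (bool list \<times> nat) gvar) edge set" and s t :: 'n
  assumes "c \<ge> 1" and "k \<ge> 1"
    and "is_c_NSOBDD c N E s t"
    and "computes E s t (F r k)"
  shows "2 powr (real (r * k) / real (4 * c - 2)) \<le> real (card N)"
proof -
  have bp: "is_bp N E s t" using assms(3) by (simp add: is_c_NSOBDD_def)
  obtain SV :: "(bool list \<times> nat) gvar \<Rightarrow> nat" where inj: "inj_on SV (prog_vars E)" and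
    SVord: "\<forall>P. comp_path E s t P \<longrightarrow> (\<exists>Ps. length Ps = c \<and> concat Ps = P \<and>
                 (\<forall>Q\<in>set Ps. sorted_wrt (<) (map (SV \<circ> fst) (labels Q))))"
    using assms(3) unfolding is_c_NSOBDD_def by blast
  have finN: "finite N" and sN: "s \<in> N" using bp by (auto simp: is_bp_def)
  have n1: "card N \<ge> 1" using finN sN by (metis One_nat_def Suc_leI card_gt_0_iff empty_iff)
  show ?thesis
  proof (cases "r = 0")
    case True
    then show ?thesis using n1 by simp
  next
    case False
    then have r1: "r \<ge> 1" by simp
    define \<rho> where "\<rho> w = SV (VarV w)" for w
    have injr: "inj_on \<rho> (CT_vertices r k)"
    proof (rule inj_onI)
      fix x y assume "x \<in> CT_vertices r k" "y \<in> CT_vertices r k" "\<rho> x = \<rho> y"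
      then have "VarV x = VarV y"
        using inj vert_prog[OF assms(4) r1] unfolding \<rho>_def inj_on_def by blast
      then show "x = y" by simp
    qed
    obtain th P where M: "matching \<rho> th (Vs k [] r) P" and cP: "((r+1) div 2)*k \<le> card P"
      using main_ind[OF assms(2) injr, of r "[]"] r1 by auto
    have VCT: "Vs k [] r \<subseteq> CT_vertices r k"
      by (auto simp: Vs_def CT_vertices_def tree_nodes_def sub_def)
    have finP: "finite P" using M by (simp add: matching_def)
    have M': "matching (\<lambda>w. SV (VarV w)) th (Vs k [] r) P" using M by (simp add: \<rho>_def[abs_def])
    have "card (Pow P) \<le> card N ^ (2*c - 1)"
    proof (rule fooling[OF bp SVord assms(4) assms(1)])
      show "finite (Pow P)" using finP by simp
      show "\<forall>j\<in>Pow P. sat (F r k) (ST P j)" using ST_sat[OF M] by blast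
      show "\<forall>j\<in>Pow P. \<forall>j'\<in>Pow P. j \<noteq> j' \<longrightarrow> \<not> sat (F r k) (mix SV th (ST P j) (ST P j')) \<or> \<not> sat (F r k) (mix SV th (ST P j') (ST P j))"
      proof (intro ballI impI)
        fix T T' assume T: "T \<in> Pow P" and T': "T' \<in> Pow P" and ne: "T \<noteq> T'"
        then obtain p where "p \<in> T - T' \<or> p \<in> T' - T" by blast
        then show "\<not> sat (F r k) (mix SV th (ST P T) (ST P T')) \<or> \<not> sat (F r k) (mix SV th (ST P T') (ST P T))"
        proof
          assume "p \<in> T - T'"
          then show ?thesis using mix_unsat[OF M' VCT, of T T' "fst p" "snd p"] T T' by auto
        next
          assume "p \<in> T' - T"
          then show ?thesis using mix_unsat[OF M' VCT, of T' T "fst p" "snd p"] T T' by auto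
        qed
      qed
    qed
    then have pw: "2 ^ card P \<le> card N ^ (2*c - 1)" using finP by (simp add: card_Pow)
    have "r * k \<le> 2 * card P"
    proof -
      have "r \<le> 2 * ((r+1) div 2)" by simp
      then have "r * k \<le> 2 * ((r+1) div 2) * k" by simp
      also have "\<dots> \<le> 2 * card P" using cP by simp
      finally show ?thesis .
    qed
    then show ?thesis using final_arith[OF assms(1) n1 pw] by blast
  qed
qed

end
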